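(* Let an FTTC mechanism satisfy stepwise equal-endowment equal treatment. Then for every FEE problem, the output assignment $p$ satisfies equal-endowment no envy: for all $i,j\in I$ with $\omega_i=\omega_j$, $p_i\succsim^{sd}_i p_j$ and $p_j\succsim^{sd}_j p_i$.
   Context: Fractional endowment exchange (FEE) problem: a tuple $(I,O,\succsim_I,\omega)$ where $I$ is a finite set of agents, $O$ a finite set of objects, each agent $i$ has a complete and transitive (possibly non-strict) preference relation $\succsim_i$ over $O$ with asymmetric part $\succ_i$ and symmetric part $\sim_i$, and $\omega=(\omega_{i,o})_{i\in I,o\in O}$ is an endowment matrix with $\omega_{i,o}\in[0,1]$, $\sum_{o\in O}\omega_{i,o}\le 1$ for each $i$, and $q_o=\sum_{i\in I}\omega_{i,o}$ an integer for each $o$. An assignment is a nonnegative matrix $p=(p_{i,o})$ with $\sum_i p_{i,o}\le q_o$ for all $o$ and $\sum_o p_{i,o}\le 1$ for all $i$; $p_i=(p_{i,o})_{o\in O}$ is $i$'s lottery; $\omega_i=(\omega_{i,o})_{o\in O}$. For vectors $l,l'\in\mathbb R^O_+$, $l\succsim^{sd}_i l'$ means $\sum_{o'\succsim_i o}l_{o'}\ge\sum_{o'\succsim_i o}l'_{o'}$ for all $o\in O$. FTTC (Fractional Top Trading Cycle) on the full preference domain. Initialize $\omega(0)=\omega$, $p(0)=0$, $O(0)=O$. At step $d\ge1$ (with $O(d-1)\ne\emptyset$): (i) Labeling. Put $T_0=O(d-1)$. For $k=1,2,\dots$: let $L_k$ be the set of agents $i\notin L_1\cup\dots\cup L_{k-1}$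 for which there exist $o\in T_{k-1}$ and $o'\in O\setminus(T_0\cup\dots\cup T_{k-1})$ with $p_{i,o'}(d-1)>0$ and $o\sim_i o'$; for $i\in L_k$ let $\tilde O_i(d-1)$ be the set of all such $o'$ for this $i$, and let $T_k=\bigcup_{i\in L_k}\tilde O_i(d-1)$. Stop at the first $k$ with $L_k=\emptyset$. Set $L(d-1)=\bigcup_k L_k$, $\tilde O(d-1)=\bigcup_{k\ge1}T_k$, $\overline{O}(d-1)=O(d-1)\cup\tilde O(d-1)$, and $\tilde O_i(d-1)=\emptyset$ for $i\notin L(d-1)$. (ii) Pointing. The active agents are $I(d-1)=L(d-1)\cup\{i\in I:\sum_o\omega_{i,o}(d-1)>0\}$. For $i\in I(d-1)$ let $B_i$ be the set of $\succsim_i$-maximal elements of $\overline{O}(d-1)$, let $k_i$ be the least $k\ge0$ with $B_i\cap T_k\ne\emptyset$, and let $A_i(d)=B_i\cap T_{k_i}$. (iii) Trading. The mechanism chooses (possibly depending on the history): a ratio matrix $\lambda(d)=(\lambda_{i,o}(d))_{i\in I(d-1),o\in\overline{O}(d-1)}$, nonnegative, with $\sum_{i\in I(d-1)}\lambda_{i,o}(d)=1$ for each $o\in\overline O(d-1)$, $\lambda_{i,o}(d)>0$ only if $\omega_{i,o}(d-1)>0$ (for $o\in O(d-1)$) and only if $o\in\tilde O_i(d-1)$ (for $o\in\tilde O(d-1)$); a quota matrix $\beta(d)$ on $I(d-1)\times O(d-1)$ with $0\le\beta_{i,o}(d)\le\omega_{i,o}(d-1)$; a division matrix $\gamma(d)$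 on $I(d-1)\times\overline O(d-1)$, nonnegative, with $\sum_o\gamma_{i,o}(d)=1$ and $\gamma_{i,o}(d)>0$ only if $o\in A_i(d)$. Let $x^*(d)=(x^*_a(d))_{a\in I(d-1)\cup\overline O(d-1)}$ be the maximum (componentwise largest) nonnegative solution of $x_o=\sum_{i\in I(d-1)}\gamma_{i,o}(d)x_i$ for all $o\in\overline O(d-1)$ and $x_i=\sum_{o\in\overline O(d-1)}\lambda_{i,o}(d)x_o$ for all $i\in I(d-1)$, subject to $\lambda_{i,o}(d)x_o\le\beta_{i,o}(d)$ for $o\in O(d-1)$ and $\lambda_{i,o}(d)x_o\le p_{i,o}(d-1)$ for $o\in\tilde O(d-1)$. For $i\in I(d-1)$: $\omega_{i,o}(d)=\omega_{i,o}(d-1)-\lambda_{i,o}(d)x^*_o(d)$ if $o\in O(d-1)$ and $0$ otherwise; $p_{i,o}(d)=p_{i,o}(d-1)-\mathbf 1[o\in\tilde O_i(d-1)]\lambda_{i,o}(d)x^*_o(d)+\gamma_{i,o}(d)x^*_i(d)$ (with $\gamma_{i,o}(d)=0$ for $o\notin\overline O(d-1)$). For $i\notin I(d-1)$, $\omega_i(d)=\omega_i(d-1)$, $p_i(d)=p_i(d-1)$. Let $O(d)=\{o\in O(d-1):\sum_i\omega_{i,o}(d)>0\}$. If $O(d)=\emptyset$ stop and output $p(d)$; otherwise go to step $d+1$. (Standing assumption: the maximum solution exists at each step and the procedure ends after finitely many steps.) An FTTC mechanism is specified by a rule choosing $\lambda(d),\beta(d),\gamma(d)$ at every step. Stepwise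 equal-endowment equal treatment (stepwise EEET): at every step $d$, for all $i,j\in I(d-1)$, if $\omega_i(d-1)=\omega_j(d-1)$ then $\lambda_{i,o}(d)=\lambda_{j,o}(d)$ for all $o\in O(d-1)$. *)

theory Defs
  imports Complex_Main
begin

(* Agents have type 'i, objects type 'ob.  An FEE problem is (I, Obj, R, w):
   R i a b  means  a \<succsim>_i b ; w is the endowment matrix (zero outside I x Obj). *)

type_synonym ('i,'ob) mat = "'i \<Rightarrow> 'ob \<Rightarrow> real"
type_synonym ('i,'ob) pref = "'i \<Rightarrow> 'ob \<Rightarrow> 'ob \<Rightarrow> bool"
(* state after step d:  (\<omega>(d), p(d), Obj(d)) *)
type_synonym ('i,'ob) st = "('i,'ob) mat \<times> ('i,'ob) mat \<times> 'ob set"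
(* choice at a step:  (\<lambda>(d), \<beta>(d), \<gamma>(d)) *)
type_synonym ('i,'ob) choice = "('i,'ob) mat \<times> ('i,'ob) mat \<times> ('i,'ob) mat"
(* a rule: given the problem and the history of states (\<omega>(0),p(0),Obj(0)),...,(\<omega>(d-1),p(d-1),Obj(d-1)),
   chooses the matrices used at step d *)
type_synonym ('i,'ob) rule =
  "'i set \<Rightarrow> 'ob set \<Rightarrow> ('i,'ob) pref \<Rightarrow> ('i,'ob) mat \<Rightarrow> ('i,'ob) st list \<Rightarrow> ('i,'ob) choice"

definition fee_problem :: "'i set \<Rightarrow> 'ob set \<Rightarrow> ('i,'ob) pref \<Rightarrow> ('i,'ob) mat \<Rightarrow> bool" where
  "fee_problem I Obj R w \<longleftrightarrow>
     finite I \<and> finite Obj \<and>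
     (\<forall>i\<in>I. (\<forall>a\<in>Obj. \<forall>b\<in>Obj. R i a b \<or> R i b a) \<and>
             (\<forall>a\<in>Obj. \<forall>b\<in>Obj. \<forall>c\<in>Obj. R i a b \<longrightarrow> R i b c \<longrightarrow> R i a c)) \<and>
     (\<forall>i ob. i \<notin> I \<or> ob \<notin> Obj \<longrightarrow> w i ob = 0) \<and>
     (\<forall>i\<in>I. \<forall>ob\<in>Obj. 0 \<le> w i ob \<and> w i ob \<le> 1) \<and>
     (\<forall>i\<in>I. (\<Sum>ob\<in>Obj. w i ob) \<le> 1) \<and>
     (\<forall>ob\<in>Obj. (\<Sum>i\<in>I. w i ob) \<in> \<int>)"

definition indiff :: "('i,'ob) pref \<Rightarrow> 'i \<Rightarrow> 'ob \<Rightarrow> 'ob \<Rightarrow> bool" where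
  "indiff R i a b \<longleftrightarrow> R i a b \<and> R i b a"

definition sd_geq :: "'ob set \<Rightarrow> ('i,'ob) pref \<Rightarrow> 'i \<Rightarrow> ('ob \<Rightarrow> real) \<Rightarrow> ('ob \<Rightarrow> real) \<Rightarrow> bool" where
  "sd_geq Obj R i l l' \<longleftrightarrow>
     (\<forall>ob\<in>Obj. (\<Sum>ob'\<in>{ob'\<in>Obj. R i ob' ob}. l ob') \<ge> (\<Sum>ob'\<in>{ob'\<in>Obj. R i ob' ob}. l' ob'))"

(* Level k returns (T_k, L_k, T_0 \<union> ... \<union> T_k, L_1 \<union> ... \<union> L_k);
   Oc = Obj(d-1), pc = p(d-1).  Once L_k = {} all later levels are empty, so taking
   unions over all k is the same as stopping at the first empty L_k. *)
fun lev :: "'i set \<Rightarrow> 'ob set \<Rightarrow> ('i,'ob) pref \<Rightarrow> 'ob set \<Rightarrow> ('i,'ob) mat \<Rightarrow> nat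
             \<Rightarrow> 'ob set \<times> 'i set \<times> 'ob set \<times> 'i set" where
  "lev I Obj R Oc pc 0 = (Oc, {}, Oc, {})"
| "lev I Obj R Oc pc (Suc k) =
     (case lev I Obj R Oc pc k of (T, _, C, A) \<Rightarrow>
       let L = {i\<in>I. i \<notin> A \<and> (\<exists>ob\<in>T. \<exists>ob'\<in>Obj - C. pc i ob' > 0 \<and> indiff R i ob ob')};
           T' = {ob'\<in>Obj - C. \<exists>i\<in>L. pc i ob' > 0 \<and> (\<exists>ob\<in>T. indiff R i ob ob')}
       in (T', L, C \<union> T', A \<union> L))"

definition labT where "labT I Obj R Oc pc k = fst (lev I Obj R Oc pc k)"
definition labL where "labL I Obj R Oc pc k = fst (snd (lev I Obj R Oc pc k))"
definition labC where "labC I Obj R Oc pc k = fst (snd (snd (lev I Obj R Oc pc k)))"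

definition Lset where "Lset I Obj R Oc pc = (\<Union>k. labL I Obj R Oc pc k)"
definition Ttil where "Ttil I Obj R Oc pc = (\<Union>k. labT I Obj R Oc pc (Suc k))"
definition Obar where "Obar I Obj R Oc pc = Oc \<union> Ttil I Obj R Oc pc"
definition Otil where
  "Otil I Obj R Oc pc i =
     {ob'. \<exists>k. i \<in> labL I Obj R Oc pc (Suc k) \<and> ob' \<in> Obj - labC I Obj R Oc pc k \<and> pc i ob' > 0 \<and>
             (\<exists>ob\<in>labT I Obj R Oc pc k. indiff R i ob ob')}"

definition Iact where
  "Iact I Obj R \<omega>c pc Oc = Lset I Obj R Oc pc \<union> {i\<in>I. (\<Sum>ob\<in>Obj. \<omega>c i ob) > 0}"

definition Bset where
  "Bset I Obj R Oc pc i = {ob\<in>Obar I Obj R Oc pc. \<forall>ob'\<in>Obar I Obj R Oc pc. R i ob ob'}"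

definition Aset where
  "Aset I Obj R Oc pc i =
     Bset I Obj R Oc pc i \<inter> labT I Obj R Oc pc (LEAST k. Bset I Obj R Oc pc i \<inter> labT I Obj R Oc pc k \<noteq> {})"

definition admissible :: "'i set \<Rightarrow> 'ob set \<Rightarrow> ('i,'ob) pref \<Rightarrow> ('i,'ob) mat \<Rightarrow> ('i,'ob) mat \<Rightarrow> 'ob set
                          \<Rightarrow> ('i,'ob) choice \<Rightarrow> bool" where
  "admissible I Obj R \<omega>c pc Oc ch \<longleftrightarrow>
     (case ch of (lam, bet, gam) \<Rightarrow>
       let Ia = Iact I Obj R \<omega>c pc Oc; Ob = Obar I Obj R Oc pc; Tt = Ttil I Obj R Oc pc in
       (\<forall>i\<in>Ia. \<forall>ob\<in>Ob. lam i ob \<ge> 0) \<and>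
       (\<forall>ob\<in>Ob. (\<Sum>i\<in>Ia. lam i ob) = 1) \<and>
       (\<forall>i\<in>Ia. \<forall>ob\<in>Oc. lam i ob > 0 \<longrightarrow> \<omega>c i ob > 0) \<and>
       (\<forall>i\<in>Ia. \<forall>ob\<in>Tt. lam i ob > 0 \<longrightarrow> ob \<in> Otil I Obj R Oc pc i) \<and>
       (\<forall>i\<in>Ia. \<forall>ob\<in>Oc. 0 \<le> bet i ob \<and> bet i ob \<le> \<omega>c i ob) \<and>
       (\<forall>i\<in>Ia. \<forall>ob\<in>Ob. gam i ob \<ge> 0) \<and>
       (\<forall>i\<in>Ia. (\<Sum>ob\<in>Ob. gam i ob) = 1) \<and>
       (\<forall>i\<in>Ia. \<forall>ob\<in>Ob. gam i ob > 0 \<longrightarrow> ob \<in> Aset I Obj R Oc pc i))"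

(* x : values x_i on agents, y : values x_o on objects *)
definition feasible :: "'i set \<Rightarrow> 'ob set \<Rightarrow> ('i,'ob) pref \<Rightarrow> ('i,'ob) mat \<Rightarrow> ('i,'ob) mat \<Rightarrow> 'ob set
                        \<Rightarrow> ('i,'ob) choice \<Rightarrow> ('i \<Rightarrow> real) \<Rightarrow> ('ob \<Rightarrow> real) \<Rightarrow> bool" where
  "feasible I Obj R \<omega>c pc Oc ch x y \<longleftrightarrow>
     (case ch of (lam, bet, gam) \<Rightarrow>
       let Ia = Iact I Obj R \<omega>c pc Oc; Ob = Obar I Obj R Oc pc; Tt = Ttil I Obj R Oc pc in
       (\<forall>i\<in>Ia. x i \<ge> 0) \<and> (\<forall>ob\<in>Ob. y ob \<ge> 0) \<and>
       (\<forall>ob\<in>Ob. y ob = (\<Sum>i\<in>Ia. gam i ob * x i)) \<and>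
       (\<forall>i\<in>Ia. x i = (\<Sum>ob\<in>Ob. lam i ob * y ob)) \<and>
       (\<forall>i\<in>Ia. \<forall>ob\<in>Oc. lam i ob * y ob \<le> bet i ob) \<and>
       (\<forall>i\<in>Ia. \<forall>ob\<in>Tt. lam i ob * y ob \<le> pc i ob))"

definition max_solution where
  "max_solution I Obj R \<omega>c pc Oc ch x y \<longleftrightarrow>
     feasible I Obj R \<omega>c pc Oc ch x y \<and>
     (\<forall>x' y'. feasible I Obj R \<omega>c pc Oc ch x' y' \<longrightarrow>
        (\<forall>i\<in>Iact I Obj R \<omega>c pc Oc. x' i \<le> x i) \<and> (\<forall>ob\<in>Obar I Obj R Oc pc. y' ob \<le> y ob))"

definition update :: "'i set \<Rightarrow> 'ob set \<Rightarrow> ('i,'ob) pref \<Rightarrow> ('i,'ob) mat \<Rightarrow> ('i,'ob) mat \<Rightarrow> 'ob set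
                      \<Rightarrow> ('i,'ob) choice \<Rightarrow> ('i \<Rightarrow> real) \<Rightarrow> ('ob \<Rightarrow> real) \<Rightarrow> ('i,'ob) st" where
  "update I Obj R \<omega>c pc Oc ch x y =
     (case ch of (lam, bet, gam) \<Rightarrow>
       let Ia = Iact I Obj R \<omega>c pc Oc; Ob = Obar I Obj R Oc pc;
           \<omega>n = (\<lambda>i ob. if i \<in> Ia then (if ob \<in> Oc then \<omega>c i ob - lam i ob * y ob else 0) else \<omega>c i ob);
           pn = (\<lambda>i ob. if i \<in> Ia then
                   pc i ob - (if ob \<in> Otil I Obj R Oc pc i then lam i ob * y ob else 0)
                          + (if ob \<in> Ob then gam i ob * x i else 0)
                 else pc i ob)
       in (\<omega>n, pn, {ob\<in>Oc. (\<Sum>i\<in>I. \<omega>n i ob) > 0}))"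

definition fttc_step where
  "fttc_step I Obj R s ch s' \<longleftrightarrow>
     (case s of (\<omega>c, pc, Oc) \<Rightarrow>
        admissible I Obj R \<omega>c pc Oc ch \<and>
        (\<exists>x y. max_solution I Obj R \<omega>c pc Oc ch x y \<and> s' = update I Obj R \<omega>c pc Oc ch x y))"

(* st is a run of the FTTC procedure under rule M on problem (I,Obj,R,w) that stops after D steps;
   st d = (\<omega>(d), p(d), Obj(d)).  Existence of such a run is the standing assumption. *)
definition fttc_run :: "('i,'ob) rule \<Rightarrow> 'i set \<Rightarrow> 'ob set \<Rightarrow> ('i,'ob) pref \<Rightarrow> ('i,'ob) mat
                        \<Rightarrow> nat \<Rightarrow> (nat \<Rightarrow> ('i,'ob) st) \<Rightarrow> bool" where
  "fttc_run M I Obj R w D st \<longleftrightarrow>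
     st 0 = (w, (\<lambda>_ _. 0), Obj) \<and>
     (\<forall>d<D. snd (snd (st d)) \<noteq> {} \<and>
            fttc_step I Obj R (st d) (M I Obj R w (map st [0..<Suc d])) (st (Suc d))) \<and>
     snd (snd (st D)) = {}"

definition stepwise_EEET :: "('i,'ob) rule \<Rightarrow> bool" where
  "stepwise_EEET M \<longleftrightarrow>
     (\<forall>I Obj R w D st. fee_problem I Obj R w \<longrightarrow> fttc_run M I Obj R w D st \<longrightarrow>
        (\<forall>d<D. case st d of (\<omega>c, pc, Oc) \<Rightarrow>
           (\<forall>i\<in>Iact I Obj R \<omega>c pc Oc. \<forall>j\<in>Iact I Obj R \<omega>c pc Oc.
              (\<forall>ob\<in>Obj. \<omega>c i ob = \<omega>c j ob) \<longrightarrow>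
              (\<forall>ob\<in>Oc. fst (M I Obj R w (map st [0..<Suc d])) i ob =
                       fst (M I Obj R w (map st [0..<Suc d])) j ob))))"

definition ee_no_envy :: "'i set \<Rightarrow> 'ob set \<Rightarrow> ('i,'ob) pref \<Rightarrow> ('i,'ob) mat \<Rightarrow> ('i,'ob) mat \<Rightarrow> bool" where
  "ee_no_envy I Obj R w p \<longleftrightarrow>
     (\<forall>i\<in>I. \<forall>j\<in>I. (\<forall>ob\<in>Obj. w i ob = w j ob) \<longrightarrow>
        sd_geq Obj R i (p i) (p j) \<and> sd_geq Obj R j (p j) (p i))"

end

theory Submission
  imports Defs
begin


definition labA where "labA I Obj R Oc pc k = snd (snd (snd (lev I Obj R Oc pc k)))"

lemma lev_0: "labT I Obj R Oc pc 0 = Oc" "labL I Obj R Oc pc 0 = {}"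
  "labC I Obj R Oc pc 0 = Oc" "labA I Obj R Oc pc 0 = {}"
  by (simp_all add: labT_def labL_def labC_def labA_def)

lemma lev_Suc:
  shows "labL I Obj R Oc pc (Suc k) = {i\<in>I. i \<notin> labA I Obj R Oc pc k \<and>
      (\<exists>ob\<in>labT I Obj R Oc pc k. \<exists>ob'\<in>Obj - labC I Obj R Oc pc k. pc i ob' > 0 \<and> indiff R i ob ob')}"
  and "labT I Obj R Oc pc (Suc k) = {ob'\<in>Obj - labC I Obj R Oc pc k.
      \<exists>i\<in>labL I Obj R Oc pc (Suc k). pc i ob' > 0 \<and> (\<exists>ob\<in>labT I Obj R Oc pc k. indiff R i ob ob')}"
  and "labC I Obj R Oc pc (Suc k) = labC I Obj R Oc pc k \<union> labT I Obj R Oc pc (Suc k)"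
  and "labA I Obj R Oc pc (Suc k) = labA I Obj R Oc pc k \<union> labL I Obj R Oc pc (Suc k)"
proof -
  obtain T L0 C A where e: "lev I Obj R Oc pc k = (T,L0,C,A)" by (cases "lev I Obj R Oc pc k") auto
  show "labL I Obj R Oc pc (Suc k) = {i\<in>I. i \<notin> labA I Obj R Oc pc k \<and>
      (\<exists>ob\<in>labT I Obj R Oc pc k. \<exists>ob'\<in>Obj - labC I Obj R Oc pc k. pc i ob' > 0 \<and> indiff R i ob ob')}"
    by (simp add: labT_def labL_def labC_def labA_def e Let_def)
  show "labT I Obj R Oc pc (Suc k) = {ob'\<in>Obj - labC I Obj R Oc pc k.
      \<exists>i\<in>labL I Obj R Oc pc (Suc k). pc i ob' > 0 \<and> (\<exists>ob\<in>labT I Obj R Oc pc k. indiff R i ob ob')}"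
    by (simp add: labT_def labL_def labC_def labA_def e Let_def)
  show "labC I Obj R Oc pc (Suc k) = labC I Obj R Oc pc k \<union> labT I Obj R Oc pc (Suc k)"
    by (simp add: labT_def labL_def labC_def labA_def e Let_def)
  show "labA I Obj R Oc pc (Suc k) = labA I Obj R Oc pc k \<union> labL I Obj R Oc pc (Suc k)"
    by (simp add: labT_def labL_def labC_def labA_def e Let_def)
qed



lemma labC_mono: "k \<le> m \<Longrightarrow> labC I Obj R Oc pc k \<subseteq> labC I Obj R Oc pc m"
  by (induction m) (auto simp: lev_Suc(3) le_Suc_eq)

lemma labC_eq: "labC I Obj R Oc pc k = (\<Union>r\<le>k. labT I Obj R Oc pc r)"
  by (induction k) (auto simp: lev_0(1,3) lev_Suc(3) atMost_Suc)

lemma labA_eq: "labA I Obj R Oc pc k = (\<Union>r<k. labL I Obj R Oc pc (Suc r))"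
  by (induction k) (auto simp: lev_0(4) lev_Suc(4) lessThan_Suc)

lemma labL_I: "labL I Obj R Oc pc k \<subseteq> I"
  by (cases k) (simp_all only: lev_0(2) lev_Suc(1); blast)+

lemma labT_Obj: "Oc \<subseteq> Obj \<Longrightarrow> labT I Obj R Oc pc k \<subseteq> Obj"
  by (cases k) (simp_all only: lev_0(1) lev_Suc(2); blast)+

lemma Obar_eq: "Obar I Obj R Oc pc = (\<Union>k. labT I Obj R Oc pc k)"
proof
  show "Obar I Obj R Oc pc \<subseteq> (\<Union>k. labT I Obj R Oc pc k)"
    unfolding Obar_def Ttil_def using lev_0(1)[of I Obj R Oc pc] by blast
  show "(\<Union>k. labT I Obj R Oc pc k) \<subseteq> Obar I Obj R Oc pc"
  proof
    fix x assume "x \<in> (\<Union>k. labT I Obj R Oc pc k)"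
    then obtain k where k: "x \<in> labT I Obj R Oc pc k" by blast
    show "x \<in> Obar I Obj R Oc pc"
    proof (cases k)
      case 0 then show ?thesis using k by (simp add: Obar_def lev_0)
    next
      case (Suc k') then show ?thesis using k by (auto simp: Obar_def Ttil_def)
    qed
  qed
qed

lemma labT_Obar: "labT I Obj R Oc pc k \<subseteq> Obar I Obj R Oc pc"
  by (auto simp: Obar_eq)

lemma labC_Obar: "labC I Obj R Oc pc k \<subseteq> Obar I Obj R Oc pc"
  by (auto simp: Obar_eq labC_eq)

lemma Obar_Obj: "Oc \<subseteq> Obj \<Longrightarrow> Obar I Obj R Oc pc \<subseteq> Obj"
proof -
  assume "Oc \<subseteq> Obj"
  then have "labT I Obj R Oc pc k \<subseteq> Obj" for k by (rule labT_Obj)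
  then show ?thesis unfolding Obar_eq by blast
qed

lemma Oc_Obar: "Oc \<subseteq> Obar I Obj R Oc pc"
  by (simp add: Obar_def)

lemma Ttil_Oc: "Ttil I Obj R Oc pc \<inter> Oc = {}"
proof -
  have "labT I Obj R Oc pc (Suc k) \<inter> Oc = {}" for k
    using labC_mono[of 0 k I Obj R Oc pc] unfolding lev_Suc(2) lev_0(3) by blast
  then show ?thesis by (auto simp: Ttil_def)
qed

lemma Ttil_Obj: "Ttil I Obj R Oc pc \<subseteq> Obj"
  unfolding Ttil_def lev_Suc(2) by blast

lemma Otil_Ttil: "Otil I Obj R Oc pc i \<subseteq> Ttil I Obj R Oc pc"
  unfolding Otil_def Ttil_def lev_Suc(2) by blast

lemma Obar_empty: "Obar I Obj R {} pc = {}"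
proof -
  have "labT I Obj R {} pc k = {}" for k by (induction k) (simp_all only: lev_0(1) lev_Suc(2); blast)+
  then show ?thesis by (simp add: Obar_eq)
qed



lemma closure:
  assumes OcO: "Oc \<subseteq> Obj" and aI: "a \<in> I" and po: "pc a ob > 0" and oO: "ob \<in> Obj"
    and o2: "o2 \<in> Obar I Obj R Oc pc" and ind: "indiff R a o2 ob"
    and H: "\<forall>o3. pc a o3 > 0 \<longrightarrow> (\<forall>o'\<in>Obar I Obj R Oc pc. R a o3 o')"
    and pO: "\<forall>o3. pc a o3 > 0 \<longrightarrow> o3 \<in> Obj"
    and tr: "\<forall>a1\<in>Obj. \<forall>b\<in>Obj. \<forall>c\<in>Obj. R a a1 b \<longrightarrow> R a b c \<longrightarrow> R a a1 c"
  shows "ob \<in> Obar I Obj R Oc pc"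
proof (rule ccontr)
  assume no: "ob \<notin> Obar I Obj R Oc pc"
  from o2 obtain m where m: "o2 \<in> labT I Obj R Oc pc m" by (auto simp: Obar_eq)
  have oC: "ob \<notin> labC I Obj R Oc pc k" for k using no labC_Obar[of I Obj R Oc pc k] by blast
  show False
  proof (cases "a \<in> labA I Obj R Oc pc m")
    case False
    then have "a \<in> labL I Obj R Oc pc (Suc m)" unfolding lev_Suc(1) using aI m oO oC po ind by blast
    then have "ob \<in> labT I Obj R Oc pc (Suc m)" unfolding lev_Suc(2) using m oO oC po ind by blast
    then show False using no labT_Obar[of I Obj R Oc pc] by blast
  next
    case True
    then obtain r where aL: "a \<in> labL I Obj R Oc pc (Suc r)" by (auto simp: labA_eq)
    then obtain ob4 ob3 where ob4: "ob4 \<in> labT I Obj R Oc pc r" and ob3: "ob3 \<in> Obj"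
      and p3: "pc a ob3 > 0" and i43: "indiff R a ob4 ob3" unfolding lev_Suc(1) by blast
    have ob4O: "ob4 \<in> Obj" using ob4 labT_Obj[OF OcO] by blast
    have o2O: "o2 \<in> Obj" using o2 Obar_Obj[OF OcO] by blast
    have "R a ob3 o2" using H p3 o2 by blast
    moreover have "R a ob ob4" using H po ob4 labT_Obar[of I Obj R Oc pc] by blast
    moreover have "R a ob4 ob3" "R a o2 ob" using i43 ind unfolding indiff_def by auto
    ultimately have "R a ob4 ob" using tr ob4O ob3 o2O oO by meson
    with \<open>R a ob ob4\<close> have "indiff R a ob4 ob" unfolding indiff_def by blast
    then have "ob \<in> labT I Obj R Oc pc (Suc r)" unfolding lev_Suc(2) using aL ob4 oO oC po by blast
    then show False using no labT_Obar[of I Obj R Oc pc] by blast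
  qed
qed



lemma Iact_I: "Iact I Obj R \<omega>c pc Oc \<subseteq> I"
  unfolding Iact_def Lset_def using labL_I by fastforce

locale fstep =
  fixes I :: "'i set" and Obj :: "'ob set" and R :: "('i,'ob) pref" and w :: "('i,'ob) mat"
    and \<omega>c :: "('i,'ob) mat" and pc :: "('i,'ob) mat" and Oc :: "'ob set"
    and lam bet gam :: "('i,'ob) mat" and x :: "'i \<Rightarrow> real" and y :: "'ob \<Rightarrow> real"
  assumes fee: "fee_problem I Obj R w"
  and OcO: "Oc \<subseteq> Obj"
  and wnn: "\<forall>i\<in>I. \<forall>ob\<in>Obj. \<omega>c i ob \<ge> 0"
  and wz: "\<forall>i\<in>I. \<forall>ob\<in>Obj - Oc. \<omega>c i ob = 0"
  and pnn: "\<forall>i ob. pc i ob \<ge> 0"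
  and pz: "\<forall>i ob. ob \<notin> Obj \<longrightarrow> pc i ob = 0"
  and adm: "admissible I Obj R \<omega>c pc Oc (lam,bet,gam)"
  and fea: "feasible I Obj R \<omega>c pc Oc (lam,bet,gam) x y"
begin

abbreviation "Ia \<equiv> Iact I Obj R \<omega>c pc Oc"
abbreviation "Ob \<equiv> Obar I Obj R Oc pc"
abbreviation "Tt \<equiv> Ttil I Obj R Oc pc"
abbreviation "Ot i \<equiv> Otil I Obj R Oc pc i"

definition "Lt i ob = (if ob \<in> Ot i then lam i ob * y ob else 0)"
definition "G i ob = (if ob \<in> Ob then gam i ob * x i else 0)"
definition "\<omega>n = (\<lambda>i ob. if i \<in> Ia then (if ob \<in> Oc then \<omega>c i ob - lam i ob * y ob else 0) else \<omega>c i ob)"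
definition "pn = (\<lambda>i ob. if i \<in> Ia then pc i ob - Lt i ob + G i ob else pc i ob)"
definition "On = {ob\<in>Oc. (\<Sum>i\<in>I. \<omega>n i ob) > 0}"

lemma update_eq: "update I Obj R \<omega>c pc Oc (lam,bet,gam) x y = (\<omega>n, pn, On)"
  unfolding update_def \<omega>n_def pn_def On_def Lt_def G_def Let_def prod.case by simp

lemma finI: "finite I" and finObj: "finite Obj"
  using fee by (auto simp: fee_problem_def)

lemma trR: "i \<in> I \<Longrightarrow> a \<in> Obj \<Longrightarrow> b \<in> Obj \<Longrightarrow> c \<in> Obj \<Longrightarrow> R i a b \<Longrightarrow> R i b c \<Longrightarrow> R i a c"
  using fee unfolding fee_problem_def by blast

lemma lam_nn: "i \<in> Ia \<Longrightarrow> ob \<in> Ob \<Longrightarrow> lam i ob \<ge> 0"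
  and lam_w: "i \<in> Ia \<Longrightarrow> ob \<in> Oc \<Longrightarrow> lam i ob > 0 \<Longrightarrow> \<omega>c i ob > 0"
  and lam_T: "i \<in> Ia \<Longrightarrow> ob \<in> Tt \<Longrightarrow> lam i ob > 0 \<Longrightarrow> ob \<in> Ot i"
  and bet_b: "i \<in> Ia \<Longrightarrow> ob \<in> Oc \<Longrightarrow> bet i ob \<le> \<omega>c i ob"
  and gam_nn: "i \<in> Ia \<Longrightarrow> ob \<in> Ob \<Longrightarrow> gam i ob \<ge> 0"
  and gam_sum: "i \<in> Ia \<Longrightarrow> (\<Sum>ob\<in>Ob. gam i ob) = 1"
  and gam_A: "i \<in> Ia \<Longrightarrow> ob \<in> Ob \<Longrightarrow> gam i ob > 0 \<Longrightarrow> ob \<in> Aset I Obj R Oc pc i"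
  using adm unfolding admissible_def Let_def by auto

lemma x_nn: "i \<in> Ia \<Longrightarrow> x i \<ge> 0"
  and y_nn: "ob \<in> Ob \<Longrightarrow> y ob \<ge> 0"
  and x_eq: "i \<in> Ia \<Longrightarrow> x i = (\<Sum>ob\<in>Ob. lam i ob * y ob)"
  and bet_c: "i \<in> Ia \<Longrightarrow> ob \<in> Oc \<Longrightarrow> lam i ob * y ob \<le> bet i ob"
  and p_c: "i \<in> Ia \<Longrightarrow> ob \<in> Tt \<Longrightarrow> lam i ob * y ob \<le> pc i ob"
  using fea[unfolded feasible_def Let_def prod.case] by blast+

lemma IaI: "Ia \<subseteq> I" by (rule Iact_I)
lemma ObO: "Ob \<subseteq> Obj" by (rule Obar_Obj[OF OcO])
lemma TtOb: "Tt \<subseteq> Ob" by (auto simp: Obar_def)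
lemma OtTt: "Ot i \<subseteq> Tt" by (rule Otil_Ttil)
lemma OtOb: "Ot i \<subseteq> Ob" using OtTt TtOb by blast
lemma finOb: "finite Ob" using ObO finObj finite_subset by blast
lemma finTt: "finite Tt" using TtOb finOb finite_subset by blast
lemma finOc: "finite Oc" using OcO finObj finite_subset by blast
lemma ObU: "Ob = Oc \<union> Tt" by (simp add: Obar_def)
lemma TtOc: "Tt \<inter> Oc = {}" by (rule Ttil_Oc)

lemma Lt_nn: "i \<in> Ia \<Longrightarrow> Lt i ob \<ge> 0"
  unfolding Lt_def using OtOb[of i] lam_nn y_nn by (auto intro: mult_nonneg_nonneg)

lemma G_nn: "i \<in> Ia \<Longrightarrow> G i ob \<ge> 0"
  unfolding G_def using gam_nn x_nn by (auto intro: mult_nonneg_nonneg)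

lemma Lt_le: "i \<in> Ia \<Longrightarrow> Lt i ob \<le> pc i ob"
  unfolding Lt_def using OtTt p_c pnn by auto

lemma On_Oc: "On \<subseteq> Oc" by (auto simp: On_def)

lemma wnn': "\<forall>i\<in>I. \<forall>ob\<in>Obj. \<omega>n i ob \<ge> 0"
proof (intro ballI)
  fix i ob assume i: "i \<in> I" and ob: "ob \<in> Obj"
  show "\<omega>n i ob \<ge> 0"
  proof (cases "i \<in> Ia \<and> ob \<in> Oc")
    case True
    then have "lam i ob * y ob \<le> \<omega>c i ob" using bet_c bet_b by fastforce
    then show ?thesis using True by (simp add: \<omega>n_def)
  next
    case False then show ?thesis using wnn i ob by (auto simp: \<omega>n_def)
  qed
qed

lemma wz': "\<forall>i\<in>I. \<forall>ob\<in>Obj - On. \<omega>n i ob = 0"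
proof (intro ballI)
  fix i ob assume i: "i \<in> I" and ob: "ob \<in> Obj - On"
  show "\<omega>n i ob = 0"
  proof (cases "ob \<in> Oc")
    case False then show ?thesis using wz i ob by (auto simp: \<omega>n_def)
  next
    case True
    then have "(\<Sum>i\<in>I. \<omega>n i ob) \<le> 0" using ob by (auto simp: On_def)
    moreover have "\<forall>i\<in>I. \<omega>n i ob \<ge> 0" using wnn' ob by blast
    moreover have "(\<Sum>i\<in>I. \<omega>n i ob) \<ge> 0" using wnn' ob by (simp add: sum_nonneg)
    ultimately have "(\<Sum>i\<in>I. \<omega>n i ob) = 0" by linarith
    then have "\<forall>i\<in>I. \<omega>n i ob = 0"
      using sum_nonneg_eq_0_iff[OF finI, of "\<lambda>i. \<omega>n i ob"] wnn' ob by blast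
    then show ?thesis using i by blast
  qed
qed

lemma pnn': "\<forall>i ob. pn i ob \<ge> 0"
  unfolding pn_def using Lt_le G_nn pnn by (smt (verit))

lemma pz': "\<forall>i ob. ob \<notin> Obj \<longrightarrow> pn i ob = 0"
  unfolding pn_def Lt_def G_def using pz OtOb ObO by auto

lemma sum_G: "i \<in> Ia \<Longrightarrow> (\<Sum>ob\<in>Obj. G i ob) = x i"
proof -
  assume i: "i \<in> Ia"
  have "(\<Sum>ob\<in>Obj. G i ob) = (\<Sum>ob\<in>Obj \<inter> Ob. gam i ob * x i)"
    unfolding G_def by (rule sum.inter_restrict[OF finObj, symmetric])
  also have "Obj \<inter> Ob = Ob" using ObO by blast
  also have "(\<Sum>ob\<in>Ob. gam i ob * x i) = (\<Sum>ob\<in>Ob. gam i ob) * x i" by (simp add: sum_distrib_right)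
  finally show ?thesis using gam_sum[OF i] by simp
qed

lemma sum_Lt: "i \<in> Ia \<Longrightarrow> (\<Sum>ob\<in>Obj. Lt i ob) = (\<Sum>ob\<in>Tt. lam i ob * y ob)"
proof -
  assume i: "i \<in> Ia"
  have "(\<Sum>ob\<in>Obj. Lt i ob) = (\<Sum>ob\<in>Obj \<inter> Ot i. lam i ob * y ob)"
    unfolding Lt_def by (rule sum.inter_restrict[OF finObj, symmetric])
  also have "Obj \<inter> Ot i = Ot i" using OtOb ObO by blast
  also have "(\<Sum>ob\<in>Ot i. lam i ob * y ob) = (\<Sum>ob\<in>Tt. lam i ob * y ob)"
  proof (rule sum.mono_neutral_left[OF finTt OtTt])
    show "\<forall>ob\<in>Tt - Ot i. lam i ob * y ob = 0"
    proof
      fix ob assume ob: "ob \<in> Tt - Ot i"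
      then have "lam i ob \<ge> 0" using lam_nn[OF i] TtOb by blast
      moreover have "\<not> lam i ob > 0" using lam_T[OF i] ob by blast
      ultimately show "lam i ob * y ob = 0" by simp
    qed
  qed
  finally show ?thesis .
qed

definition "E i = (\<Sum>ob\<in>Oc. lam i ob * y ob)"

lemma x_split: "i \<in> Ia \<Longrightarrow> x i = E i + (\<Sum>ob\<in>Tt. lam i ob * y ob)"
  unfolding x_eq E_def ObU by (rule sum.union_disjoint[OF finOc finTt]) (use TtOc in blast)

lemma sum_wc: "i \<in> I \<Longrightarrow> (\<Sum>ob\<in>Obj. \<omega>c i ob) = (\<Sum>ob\<in>Oc. \<omega>c i ob)"
  by (rule sum.mono_neutral_right[OF finObj OcO]) (use wz in blast)

lemma sum_wn: "i \<in> Ia \<Longrightarrow> (\<Sum>ob\<in>Obj. \<omega>n i ob) = (\<Sum>ob\<in>Obj. \<omega>c i ob) - E i"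
proof -
  assume i: "i \<in> Ia"
  have "(\<Sum>ob\<in>Obj. \<omega>n i ob) = (\<Sum>ob\<in>Obj. if ob \<in> Oc then \<omega>c i ob - lam i ob * y ob else 0)"
    using i by (simp add: \<omega>n_def)
  also have "\<dots> = (\<Sum>ob\<in>Obj \<inter> Oc. \<omega>c i ob - lam i ob * y ob)"
    by (rule sum.inter_restrict[OF finObj, symmetric])
  also have "Obj \<inter> Oc = Oc" using OcO by blast
  also have "(\<Sum>ob\<in>Oc. \<omega>c i ob - lam i ob * y ob) = (\<Sum>ob\<in>Oc. \<omega>c i ob) - E i"
    by (simp add: E_def sum_subtractf)
  finally show ?thesis using sum_wc i IaI by auto
qed

lemma mass: "i \<in> I \<Longrightarrow> (\<Sum>ob\<in>Obj. pn i ob) + (\<Sum>ob\<in>Obj. \<omega>n i ob) = (\<Sum>ob\<in>Obj. pc i ob) + (\<Sum>ob\<in>Obj. \<omega>c i ob)"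
proof (cases "i \<in> Ia")
  case True
  have "(\<Sum>ob\<in>Obj. pn i ob) = (\<Sum>ob\<in>Obj. pc i ob) - (\<Sum>ob\<in>Obj. Lt i ob) + (\<Sum>ob\<in>Obj. G i ob)"
    using True by (simp add: pn_def sum.distrib sum_subtractf)
  then show ?thesis using True sum_G sum_Lt x_split sum_wn by simp
next
  case False then show ?thesis by (simp add: pn_def \<omega>n_def)
qed

lemma U_le: "U \<inter> Ob = {} \<Longrightarrow> (\<Sum>ob\<in>U. pn i ob) \<le> (\<Sum>ob\<in>U. pc i ob)"
proof (rule sum_mono)
  fix ob assume "U \<inter> Ob = {}" "ob \<in> U"
  then have "G i ob = 0" by (auto simp: G_def)
  then show "pn i ob \<le> pc i ob" using Lt_nn by (simp add: pn_def)
qed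

lemma U_ge: "U \<inter> Ob = {} \<Longrightarrow> (\<Sum>ob\<in>U. pn i ob) \<ge> (\<Sum>ob\<in>U. pc i ob)"
proof (rule sum_mono)
  fix ob assume "U \<inter> Ob = {}" "ob \<in> U"
  then have "Lt i ob = 0" using OtOb by (auto simp: Lt_def)
  then show "pc i ob \<le> pn i ob" using G_nn by (simp add: pn_def)
qed

lemma U_gain:
  assumes i: "i \<in> I" and o0: "o0 \<in> Obj" and U: "U = {o'\<in>Obj. R i o' o0}" and ne: "U \<inter> Ob \<noteq> {}"
  shows "(\<Sum>ob\<in>U. pn i ob) \<ge> (\<Sum>ob\<in>U. pc i ob) + ((\<Sum>ob\<in>Obj. \<omega>c i ob) - (\<Sum>ob\<in>Obj. \<omega>n i ob))"
proof (cases "i \<in> Ia")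
  case False then show ?thesis by (simp add: pn_def \<omega>n_def)
next
  case True
  have UO: "U \<subseteq> Obj" using U by blast
  have finU: "finite U" using UO finObj finite_subset by blast
  obtain o1 where o1: "o1 \<in> U" "o1 \<in> Ob" using ne by blast
  have "(\<Sum>ob\<in>U. pn i ob) = (\<Sum>ob\<in>U. pc i ob) - (\<Sum>ob\<in>U. Lt i ob) + (\<Sum>ob\<in>U. G i ob)"
    using True by (simp add: pn_def sum.distrib sum_subtractf)
  moreover have "(\<Sum>ob\<in>U. Lt i ob) \<le> (\<Sum>ob\<in>Obj. Lt i ob)"
    by (rule sum_mono2[OF finObj UO]) (use Lt_nn True in blast)
  moreover have "(\<Sum>ob\<in>U. G i ob) = (\<Sum>ob\<in>Obj. G i ob)"
  proof (rule sum.mono_neutral_left[OF finObj UO], rule ballI)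
    fix ob assume ob: "ob \<in> Obj - U"
    show "G i ob = 0"
    proof (rule ccontr)
      assume "G i ob \<noteq> 0"
      then have obO: "ob \<in> Ob" and g: "gam i ob \<noteq> 0" by (auto simp: G_def split: if_splits)
      then have "gam i ob > 0" using gam_nn True by force
      then have "ob \<in> Aset I Obj R Oc pc i" using gam_A True obO by blast
      then have "R i ob o1" using o1 by (auto simp: Aset_def Bset_def)
      moreover have "R i o1 o0" using o1 U by blast
      ultimately have "R i ob o0" using trR[OF i] o0 o1 ObO obO by blast
      then show False using ob U by blast
    qed
  qed
  ultimately show ?thesis using True sum_G sum_Lt x_split sum_wn by simp
qed

lemma mono_and_H:
  assumes H: "\<forall>a\<in>I. \<forall>ob. pc a ob > 0 \<longrightarrow> (\<forall>o'\<in>Ob. R a ob o')"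
  shows "Obar I Obj R On pn \<subseteq> Ob"
    and "\<forall>a\<in>I. \<forall>ob. pn a ob > 0 \<longrightarrow> (\<forall>o'\<in>Obar I Obj R On pn. R a ob o')"
proof -
  have gainA: "ob \<in> Aset I Obj R Oc pc a \<and> ob \<in> Ob" if "pn a ob > 0" "\<not> pc a ob > 0" for a ob
  proof -
    have aI: "a \<in> Ia" using that by (auto simp: pn_def split: if_splits)
    then have "G a ob > 0" using that Lt_nn[OF aI, of ob] by (simp add: pn_def)
    then have obO: "ob \<in> Ob" and g: "gam a ob \<noteq> 0" by (auto simp: G_def split: if_splits)
    then have "gam a ob > 0" using gam_nn aI by force
    then show ?thesis using gam_A aI obO by blast
  qed
  have tr: "\<forall>a1\<in>Obj. \<forall>b\<in>Obj. \<forall>c\<in>Obj. R a a1 b \<longrightarrow> R a b c \<longrightarrow> R a a1 c" if "a \<in> I" for a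
    using trR[OF that] by blast
  have "labT I Obj R On pn k \<subseteq> Ob" for k
  proof (induction k)
    case 0 then show ?case using On_Oc Oc_Obar[of Oc I Obj R pc] by (simp add: lev_0)
  next
    case (Suc k)
    show ?case
    proof
      fix ob assume "ob \<in> labT I Obj R On pn (Suc k)"
      then have "ob \<in> Obj \<and> (\<exists>a\<in>labL I Obj R On pn (Suc k). pn a ob > 0 \<and> (\<exists>o2\<in>labT I Obj R On pn k. indiff R a o2 ob))"
        unfolding lev_Suc(2) by simp
      then obtain a o2 where obO: "ob \<in> Obj" and aL: "a \<in> labL I Obj R On pn (Suc k)" and pa: "pn a ob > 0"
        and o2: "o2 \<in> labT I Obj R On pn k" and ind: "indiff R a o2 ob"
        by blast
      have aI: "a \<in> I" using aL labL_I[of I Obj R On pn] by blast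
      have o2b: "o2 \<in> Ob" using o2 Suc.IH by blast
      show "ob \<in> Ob"
      proof (cases "pc a ob > 0")
        case True
        show ?thesis
        proof (rule closure[OF OcO aI True obO o2b ind])
          show "\<forall>o3. 0 < pc a o3 \<longrightarrow> (\<forall>o'\<in>Ob. R a o3 o')" using H aI by blast
          show "\<forall>o3. 0 < pc a o3 \<longrightarrow> o3 \<in> Obj" using pz by (metis less_irrefl)
          show "\<forall>a1\<in>Obj. \<forall>b\<in>Obj. \<forall>c\<in>Obj. R a a1 b \<longrightarrow> R a b c \<longrightarrow> R a a1 c" by (rule tr[OF aI])
        qed
      next
        case False then show ?thesis using gainA pa by blast
      qed
    qed
  qed
  then show sub: "Obar I Obj R On pn \<subseteq> Ob" by (auto simp: Obar_eq)
  show "\<forall>a\<in>I. \<forall>ob. pn a ob > 0 \<longrightarrow> (\<forall>o'\<in>Obar I Obj R On pn. R a ob o')"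
  proof (intro ballI allI impI)
    fix a ob o' assume aI: "a \<in> I" and pa: "pn a ob > 0" and o': "o' \<in> Obar I Obj R On pn"
    then have o'b: "o' \<in> Ob" using sub by blast
    show "R a ob o'"
    proof (cases "pc a ob > 0")
      case True then show ?thesis using H aI o'b by blast
    next
      case False
      then have "ob \<in> Aset I Obj R Oc pc a" using gainA pa by blast
      then show ?thesis using o'b by (auto simp: Aset_def Bset_def)
    qed
  qed
qed

lemma w_eq:
  assumes i: "i \<in> I" and j: "j \<in> I" and eq: "\<forall>ob\<in>Obj. \<omega>c i ob = \<omega>c j ob"
    and leq: "i \<in> Ia \<Longrightarrow> j \<in> Ia \<Longrightarrow> \<forall>ob\<in>Oc. lam i ob = lam j ob"
  shows "\<forall>ob\<in>Obj. \<omega>n i ob = \<omega>n j ob"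
proof -
  have zero: "\<forall>ob\<in>Obj. \<omega>n a ob = 0" if a: "a \<in> I" and z: "\<forall>ob\<in>Obj. \<omega>c a ob = 0" for a
  proof
    fix ob assume ob: "ob \<in> Obj"
    show "\<omega>n a ob = 0"
    proof (cases "a \<in> Ia \<and> ob \<in> Oc")
      case True
      then have "lam a ob \<ge> 0" using lam_nn Oc_Obar[of Oc I Obj R pc] by blast
      moreover have "\<not> lam a ob > 0" using lam_w True z ob by force
      ultimately show ?thesis using True z ob by (simp add: \<omega>n_def)
    next
      case False then show ?thesis using z ob by (auto simp: \<omega>n_def)
    qed
  qed
  have inact: "\<forall>ob\<in>Obj. \<omega>c a ob = 0" if a: "a \<in> I" "a \<notin> Ia" for a
  proof -
    have "(\<Sum>ob\<in>Obj. \<omega>c a ob) \<le> 0" using a by (auto simp: Iact_def)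
    moreover have "\<forall>ob\<in>Obj. \<omega>c a ob \<ge> 0" using wnn a by blast
    moreover have "(\<Sum>ob\<in>Obj. \<omega>c a ob) \<ge> 0" using wnn a by (simp add: sum_nonneg)
    ultimately have "(\<Sum>ob\<in>Obj. \<omega>c a ob) = 0" by linarith
    then show ?thesis
      using sum_nonneg_eq_0_iff[OF finObj, of "\<omega>c a"] wnn a by blast
  qed
  show ?thesis
  proof (cases "i \<in> Ia \<and> j \<in> Ia")
    case True
    then show ?thesis using leq eq by (auto simp: \<omega>n_def)
  next
    case False
    then have "\<forall>ob\<in>Obj. \<omega>c i ob = 0 \<and> \<omega>c j ob = 0" using inact i j eq by metis
    then show ?thesis using zero i j by auto
  qed
qed

end



locale frun =
  fixes M :: "('i,'ob) rule" and I :: "'i set" and Obj :: "'ob set" and R :: "('i,'ob) pref"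
    and w :: "('i,'ob) mat" and D :: nat and st :: "nat \<Rightarrow> ('i,'ob) st"
  assumes eeet: "stepwise_EEET M"
    and fee: "fee_problem I Obj R w"
    and run: "fttc_run M I Obj R w D st"
begin

abbreviation "om d \<equiv> fst (st d)"
abbreviation "pp d \<equiv> fst (snd (st d))"
abbreviation "Ok d \<equiv> snd (snd (st d))"
abbreviation "Ob d \<equiv> Obar I Obj R (Ok d) (pp d)"

lemma st_eq: "st d = (om d, pp d, Ok d)" by simp

lemma run0: "om 0 = w" "pp 0 = (\<lambda>_ _. 0)" "Ok 0 = Obj"
  using run by (auto simp: fttc_run_def)

lemma runD: "Ok D = {}"
  using run by (auto simp: fttc_run_def)

lemma step_raw:
  assumes "d < D"
  obtains lam bet gam x y where "M I Obj R w (map st [0..<Suc d]) = (lam,bet,gam)"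
    "admissible I Obj R (om d) (pp d) (Ok d) (lam,bet,gam)"
    "feasible I Obj R (om d) (pp d) (Ok d) (lam,bet,gam) x y"
    "st (Suc d) = update I Obj R (om d) (pp d) (Ok d) (lam,bet,gam) x y"
proof -
  obtain lam bet gam where ch: "M I Obj R w (map st [0..<Suc d]) = (lam,bet,gam)" by (metis prod_cases3)
  have "fttc_step I Obj R (st d) (M I Obj R w (map st [0..<Suc d])) (st (Suc d))"
    using run assms by (auto simp: fttc_run_def)
  then have "fttc_step I Obj R (om d, pp d, Ok d) (lam,bet,gam) (st (Suc d))"
    using ch by simp
  then show ?thesis using that ch unfolding fttc_step_def max_solution_def by auto
qed

definition "Inv d \<longleftrightarrow> Ok d \<subseteq> Obj \<and> (\<forall>i\<in>I. \<forall>ob\<in>Obj. om d i ob \<ge> 0) \<and>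
   (\<forall>i\<in>I. \<forall>ob\<in>Obj - Ok d. om d i ob = 0) \<and> (\<forall>i ob. pp d i ob \<ge> 0) \<and>
   (\<forall>i ob. ob \<notin> Obj \<longrightarrow> pp d i ob = 0) \<and>
   (\<forall>a\<in>I. \<forall>ob. pp d a ob > 0 \<longrightarrow> (\<forall>o'\<in>Ob d. R a ob o'))"

lemma inv_all: "d \<le> D \<Longrightarrow> Inv d"
proof (induction d)
  case 0
  show ?case using fee run0 unfolding Inv_def fee_problem_def by auto
next
  case (Suc d)
  then have dD: "d < D" and I: "Inv d" by auto
  obtain lam bet gam x y where ch: "M I Obj R w (map st [0..<Suc d]) = (lam,bet,gam)"
    and a: "admissible I Obj R (om d) (pp d) (Ok d) (lam,bet,gam)"
    and f: "feasible I Obj R (om d) (pp d) (Ok d) (lam,bet,gam) x y"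
    and u: "st (Suc d) = update I Obj R (om d) (pp d) (Ok d) (lam,bet,gam) x y"
    using step_raw[OF dD] by blast
  interpret S: fstep I Obj R w "om d" "pp d" "Ok d" lam bet gam x y
    using fee a f I unfolding Inv_def by unfold_locales auto
  have e: "st (Suc d) = (S.\<omega>n, S.pn, S.On)" using u S.update_eq by simp
  have H: "\<forall>a\<in>I. \<forall>ob. pp d a ob > 0 \<longrightarrow> (\<forall>o'\<in>Ob d. R a ob o')" using I unfolding Inv_def by blast
  show ?case unfolding Inv_def e fst_conv snd_conv
    using S.On_Oc S.OcO S.wnn' S.wz' S.pnn' S.pz' S.mono_and_H(2)[OF H] by blast
qed

lemma step_ex:
  assumes "d < D"
  obtains lam bet gam x y where "M I Obj R w (map st [0..<Suc d]) = (lam,bet,gam)"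
    "fstep I Obj R w (om d) (pp d) (Ok d) lam bet gam x y"
    "st (Suc d) = update I Obj R (om d) (pp d) (Ok d) (lam,bet,gam) x y"
proof -
  obtain lam bet gam x y where ch: "M I Obj R w (map st [0..<Suc d]) = (lam,bet,gam)"
    and a: "admissible I Obj R (om d) (pp d) (Ok d) (lam,bet,gam)"
    and f: "feasible I Obj R (om d) (pp d) (Ok d) (lam,bet,gam) x y"
    and u: "st (Suc d) = update I Obj R (om d) (pp d) (Ok d) (lam,bet,gam) x y"
    using step_raw[OF assms] by blast
  have I: "Inv d" using inv_all assms by simp
  have "fstep I Obj R w (om d) (pp d) (Ok d) lam bet gam x y"
    using fee a f I unfolding Inv_def by unfold_locales auto
  then show ?thesis using that ch u by blast
qed

lemma S_all:
  assumes dD: "d < D"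
  shows "Ob (Suc d) \<subseteq> Ob d"
    and "i \<in> I \<Longrightarrow> (\<Sum>ob\<in>Obj. pp (Suc d) i ob) + (\<Sum>ob\<in>Obj. om (Suc d) i ob) = (\<Sum>ob\<in>Obj. pp d i ob) + (\<Sum>ob\<in>Obj. om d i ob)"
    and "U \<inter> Ob d = {} \<Longrightarrow> (\<Sum>ob\<in>U. pp (Suc d) i ob) \<le> (\<Sum>ob\<in>U. pp d i ob)"
    and "U \<inter> Ob d = {} \<Longrightarrow> (\<Sum>ob\<in>U. pp (Suc d) i ob) \<ge> (\<Sum>ob\<in>U. pp d i ob)"
    and "i \<in> I \<Longrightarrow> o0 \<in> Obj \<Longrightarrow> U = {o'\<in>Obj. R i o' o0} \<Longrightarrow> U \<inter> Ob d \<noteq> {} \<Longrightarrow>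
       (\<Sum>ob\<in>U. pp (Suc d) i ob) \<ge> (\<Sum>ob\<in>U. pp d i ob) + ((\<Sum>ob\<in>Obj. om d i ob) - (\<Sum>ob\<in>Obj. om (Suc d) i ob))"
    and "i \<in> I \<Longrightarrow> j \<in> I \<Longrightarrow> \<forall>ob\<in>Obj. om d i ob = om d j ob \<Longrightarrow> \<forall>ob\<in>Obj. om (Suc d) i ob = om (Suc d) j ob"
proof -
  obtain lam bet gam x y where ch: "M I Obj R w (map st [0..<Suc d]) = (lam,bet,gam)"
    and fs: "fstep I Obj R w (om d) (pp d) (Ok d) lam bet gam x y"
    and u: "st (Suc d) = update I Obj R (om d) (pp d) (Ok d) (lam,bet,gam) x y"
    using step_ex[OF dD] by blast
  interpret S: fstep I Obj R w "om d" "pp d" "Ok d" lam bet gam x y by (rule fs)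
  have e: "st (Suc d) = (S.\<omega>n, S.pn, S.On)" using u S.update_eq by simp
  have I: "Inv d" using inv_all dD by simp
  have H: "\<forall>a\<in>I. \<forall>ob. pp d a ob > 0 \<longrightarrow> (\<forall>o'\<in>Ob d. R a ob o')" using I unfolding Inv_def by blast
  show "Ob (Suc d) \<subseteq> Ob d" unfolding e fst_conv snd_conv by (rule S.mono_and_H(1)[OF H])
  show "i \<in> I \<Longrightarrow> (\<Sum>ob\<in>Obj. pp (Suc d) i ob) + (\<Sum>ob\<in>Obj. om (Suc d) i ob) = (\<Sum>ob\<in>Obj. pp d i ob) + (\<Sum>ob\<in>Obj. om d i ob)"
    unfolding e fst_conv snd_conv by (rule S.mass)
  show "U \<inter> Ob d = {} \<Longrightarrow> (\<Sum>ob\<in>U. pp (Suc d) i ob) \<le> (\<Sum>ob\<in>U. pp d i ob)"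
    unfolding e fst_conv snd_conv by (rule S.U_le)
  show "U \<inter> Ob d = {} \<Longrightarrow> (\<Sum>ob\<in>U. pp (Suc d) i ob) \<ge> (\<Sum>ob\<in>U. pp d i ob)"
    unfolding e fst_conv snd_conv by (rule S.U_ge)
  show "i \<in> I \<Longrightarrow> o0 \<in> Obj \<Longrightarrow> U = {o'\<in>Obj. R i o' o0} \<Longrightarrow> U \<inter> Ob d \<noteq> {} \<Longrightarrow>
       (\<Sum>ob\<in>U. pp (Suc d) i ob) \<ge> (\<Sum>ob\<in>U. pp d i ob) + ((\<Sum>ob\<in>Obj. om d i ob) - (\<Sum>ob\<in>Obj. om (Suc d) i ob))"
    unfolding e fst_conv snd_conv by (rule S.U_gain)
  show "i \<in> I \<Longrightarrow> j \<in> I \<Longrightarrow> \<forall>ob\<in>Obj. om d i ob = om d j ob \<Longrightarrow> \<forall>ob\<in>Obj. om (Suc d) i ob = om (Suc d) j ob"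
  proof -
    assume i: "i \<in> I" and j: "j \<in> I" and eq: "\<forall>ob\<in>Obj. om d i ob = om d j ob"
    have E: "case st d of (\<omega>c, pc, Oc) \<Rightarrow>
           (\<forall>i\<in>Iact I Obj R \<omega>c pc Oc. \<forall>j\<in>Iact I Obj R \<omega>c pc Oc.
              (\<forall>ob\<in>Obj. \<omega>c i ob = \<omega>c j ob) \<longrightarrow>
              (\<forall>ob\<in>Oc. fst (M I Obj R w (map st [0..<Suc d])) i ob =
                       fst (M I Obj R w (map st [0..<Suc d])) j ob))"
      using mp[OF mp[OF eeet[unfolded stepwise_EEET_def, THEN spec[where x=I], THEN spec[where x=Obj],
          THEN spec[where x=R], THEN spec[where x=w], THEN spec[where x=D], THEN spec[where x=st]] fee] run,
          THEN spec[where x=d], THEN mp, OF dD] .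
    have "i \<in> S.Ia \<Longrightarrow> j \<in> S.Ia \<Longrightarrow> \<forall>ob\<in>Ok d. lam i ob = lam j ob"
    proof -
      have E': "\<forall>i\<in>S.Ia. \<forall>j\<in>S.Ia. (\<forall>ob\<in>Obj. om d i ob = om d j ob) \<longrightarrow> (\<forall>ob\<in>Ok d. lam i ob = lam j ob)"
        using E by (simp only: split_beta ch fst_conv)
      show "i \<in> S.Ia \<Longrightarrow> j \<in> S.Ia \<Longrightarrow> \<forall>ob\<in>Ok d. lam i ob = lam j ob" using E' eq by blast
    qed
    then show ?thesis unfolding e fst_conv snd_conv using S.w_eq[OF i j eq] by blast
  qed
qed

end



context frun
begin

lemma finObj: "finite Obj" using fee by (simp add: fee_problem_def)

lemma mass_all: "d \<le> D \<Longrightarrow> a \<in> I \<Longrightarrow> (\<Sum>ob\<in>Obj. pp d a ob) + (\<Sum>ob\<in>Obj. om d a ob) = (\<Sum>ob\<in>Obj. w a ob)"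
proof (induction d)
  case 0 then show ?case using run0 by simp
next
  case (Suc d) then show ?case using S_all(2)[of d a] by simp
qed

lemma weq_all: "d \<le> D \<Longrightarrow> i \<in> I \<Longrightarrow> j \<in> I \<Longrightarrow> \<forall>ob\<in>Obj. w i ob = w j ob \<Longrightarrow> \<forall>ob\<in>Obj. om d i ob = om d j ob"
proof (induction d)
  case 0 then show ?case using run0 by simp
next
  case (Suc d) then show ?case using S_all(6)[of d i j] by simp
qed

lemma sd_one:
  assumes i: "i \<in> I" and j: "j \<in> I" and wij: "\<forall>ob\<in>Obj. w i ob = w j ob" and o0: "o0 \<in> Obj"
  shows "(\<Sum>ob'\<in>{ob'\<in>Obj. R i ob' o0}. pp D i ob') \<ge> (\<Sum>ob'\<in>{ob'\<in>Obj. R i ob' o0}. pp D j ob')"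
proof -
  define U where "U = {ob'\<in>Obj. R i ob' o0}"
  have UO: "U \<subseteq> Obj" by (auto simp: U_def)
  define W where "W = (\<Sum>ob\<in>Obj. w i ob)"
  define Om where "Om d = (\<Sum>ob\<in>Obj. om d i ob)" for d
  define Phi where "Phi d \<longleftrightarrow> U \<inter> Ob d \<noteq> {}" for d
  have anti: "d < D \<Longrightarrow> Phi (Suc d) \<Longrightarrow> Phi d" for d using S_all(1)[of d] by (auto simp: Phi_def)
  have notD: "\<not> Phi D" using runD Obar_empty[of I Obj R "pp D"] by (simp add: Phi_def)
  define k where "k = (LEAST d. \<not> Phi d)"
  have nk: "\<not> Phi k" unfolding k_def by (rule LeastI[of _ D]) (rule notD)
  have kD: "k \<le> D" unfolding k_def by (rule Least_le) (rule notD)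
  have before: "d < k \<Longrightarrow> Phi d" for d unfolding k_def using not_less_Least by blast
  have after: "\<not> Phi d" if "k \<le> d" "d \<le> D" for d
    using that(1,2)
  proof (induction d rule: dec_induct)
    case base show ?case using nk by simp
  next
    case (step n) then show ?case using anti[of n] by auto
  qed
  have C1: "d \<le> k \<Longrightarrow> (\<Sum>ob\<in>U. pp d i ob) \<ge> W - Om d" for d
  proof (induction d)
    case 0 then show ?case using run0 by (simp add: W_def Om_def)
  next
    case (Suc d)
    then have dk: "d < k" by simp
    then have "Phi d" by (rule before)
    then have "(\<Sum>ob\<in>U. pp (Suc d) i ob) \<ge> (\<Sum>ob\<in>U. pp d i ob) + (Om d - Om (Suc d))"
      unfolding Om_def Phi_def using S_all(5)[of d i o0 U] dk kD i o0 U_def by simp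
    then show ?case using Suc dk by simp
  qed
  have C2: "(\<Sum>ob\<in>U. pp D i ob) \<ge> (\<Sum>ob\<in>U. pp k i ob)"
    using kD
  proof (induction D rule: dec_induct)
    case base then show ?case by simp
  next
    case (step n)
    then have "\<not> Phi n" using after[of n] by simp
    then have "(\<Sum>ob\<in>U. pp (Suc n) i ob) \<ge> (\<Sum>ob\<in>U. pp n i ob)"
      using S_all(4)[of n U i] step by (simp add: Phi_def)
    then show ?case using step by simp
  qed
  have C3: "(\<Sum>ob\<in>U. pp D j ob) \<le> (\<Sum>ob\<in>U. pp k j ob)"
    using kD
  proof (induction D rule: dec_induct)
    case base then show ?case by simp
  next
    case (step n)
    then have "\<not> Phi n" using after[of n] by simp
    then have "(\<Sum>ob\<in>U. pp (Suc n) j ob) \<le> (\<Sum>ob\<in>U. pp n j ob)"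
      using S_all(3)[of n U j] step by (simp add: Phi_def)
    then show ?case using step by simp
  qed
  have pnn: "\<forall>i ob. pp k i ob \<ge> 0" using inv_all[OF kD] by (simp add: Inv_def)
  have "(\<Sum>ob\<in>U. pp k j ob) \<le> (\<Sum>ob\<in>Obj. pp k j ob)"
    by (rule sum_mono2[OF finObj UO]) (use pnn in blast)
  also have "\<dots> = (\<Sum>ob\<in>Obj. w j ob) - (\<Sum>ob\<in>Obj. om k j ob)"
    using mass_all[OF kD j] by simp
  also have "(\<Sum>ob\<in>Obj. w j ob) = W" using wij by (simp add: W_def)
  also have "(\<Sum>ob\<in>Obj. om k j ob) = Om k" using weq_all[OF kD i j wij] by (simp add: Om_def)
  finally have "(\<Sum>ob\<in>U. pp k j ob) \<le> W - Om k" .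
  then show ?thesis using C1[of k] C2 C3 by (simp add: U_def)
qed

lemma main: "ee_no_envy I Obj R w (pp D)"
  unfolding ee_no_envy_def sd_geq_def
proof (intro ballI impI conjI)
  fix i j ob assume i: "i \<in> I" and j: "j \<in> I" and wij: "\<forall>ob\<in>Obj. w i ob = w j ob" and ob: "ob \<in> Obj"
  show "(\<Sum>ob'\<in>{ob'\<in>Obj. R i ob' ob}. pp D i ob') \<ge> (\<Sum>ob'\<in>{ob'\<in>Obj. R i ob' ob}. pp D j ob')"
    by (rule sd_one[OF i j wij ob])
next
  fix i j ob assume i: "i \<in> I" and j: "j \<in> I" and wij: "\<forall>ob\<in>Obj. w i ob = w j ob" and ob: "ob \<in> Obj"
  show "(\<Sum>ob'\<in>{ob'\<in>Obj. R j ob' ob}. pp D j ob') \<ge> (\<Sum>ob'\<in>{ob'\<in>Obj. R j ob' ob}. pp D i ob')"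
    by (rule sd_one[OF j i _ ob]) (use wij in simp)
qed

end

theorem proposition2:
  fixes M :: "('i,'ob) rule"
    and I :: "'i set" and Obj :: "'ob set" and R :: "('i,'ob) pref" and w :: "('i,'ob) mat"
    and D :: nat and st :: "nat \<Rightarrow> ('i,'ob) st"
  assumes "stepwise_EEET M"
    and "fee_problem I Obj R w"
    and "fttc_run M I Obj R w D st"
  shows "ee_no_envy I Obj R w (fst (snd (st D)))"
proof -
  interpret frun M I Obj R w D st using assms by unfold_locales
  show ?thesis by (rule main)
qed

end
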